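(* Assume the standing setup below. Let $s$ be a real number such that for some index $i$ with $1\le i\le k$ we have $s_i\le s$ and $s+r<s_{i+1}$. Then: (1) the simplicial complex $V_s(X)(y)$ is connected (and nonempty); (2) the function $\pi_0V_s(X)\to\pi_0V_s(Y)$, $[x]_{s,X}\mapsto[x]_{s,Y}$, induced by the inclusion $V_s(X)\subseteq V_s(Y)$, is a bijection.
   Context: For a finite set $Z\subset\mathbb{R}^n$ and a real number $s\ge 0$, the Vietoris–Rips complex $V_s(Z)$ is the simplicial complex with vertex set $Z$ whose simplices are the nonempty subsets $\sigma\subseteq Z$ with $d(z,z')\le s$ for all $z,z'\in\sigma$ ($d$ the Euclidean distance). For $z\in Z$, $[z]_{s,Z}\subseteq Z$ denotes the set of vertices of the path component of $V_s(Z)$ containing $z$. Standing setup: $X\subset\mathbb{R}^n$ is a finite set with at least two points, $y\in\mathbb{R}^n\setminus X$, $Y=X\sqcup\{y\}$. The phase change numbers of $X$ are the distinct values $0=s_0<s_1<\dots<s_k$ of $d(x,x')$ for $x,x'\in X$; set $s_{k+1}=+\infty$. There are $x_0\in X$ and a real $r>0$ with $d(y,x_0)<r$ and $r<s_{i+1}-s_i$ for all $0\le i<k$. For $s\ge0$, $V_s(X)(y)$ denotes the full subcomplex of $V_s(X)$ on the set of vertices $x\in X$ with $[x]_{s,Y}=[y]_{s,Y}$ (a full subcomplex on a vertex set $W$ consists of all simplices whose vertices all lie in $W$). *)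

theory Defs
  imports "HOL-Analysis.Analysis"
begin

definition rips :: "real \<Rightarrow> 'a::euclidean_space set \<Rightarrow> 'a set set" where
  "rips s Z = {\<sigma>. \<sigma> \<noteq> {} \<and> \<sigma> \<subseteq> Z \<and> (\<forall>z\<in>\<sigma>. \<forall>z'\<in>\<sigma>. dist z z' \<le> s)}"

definition sc_vertices :: "'a set set \<Rightarrow> 'a set" where
  "sc_vertices K = \<Union>K"

definition sc_edges :: "'a set set \<Rightarrow> ('a \<times> 'a) set" where
  "sc_edges K = {(a, b). {a, b} \<in> K}"

text \<open>A simplicial complex is connected iff it is nonempty and any two vertices are joined
  by an edge path (equivalently, its geometric realization is path connected).\<close>
definition sc_connected :: "'a set set \<Rightarrow> bool" where
  "sc_connected K \<longleftrightarrow> sc_vertices K \<noteq> {} \<and>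
     (\<forall>a\<in>sc_vertices K. \<forall>b\<in>sc_vertices K. (a, b) \<in> (sc_edges K)\<^sup>*)"

definition sc_component :: "'a set set \<Rightarrow> 'a \<Rightarrow> 'a set" where
  "sc_component K z = {w \<in> sc_vertices K. (z, w) \<in> (sc_edges K)\<^sup>*}"

definition rcls :: "real \<Rightarrow> 'a::euclidean_space set \<Rightarrow> 'a \<Rightarrow> 'a set" where
  "rcls s Z z = sc_component (rips s Z) z"

definition pi0 :: "real \<Rightarrow> 'a::euclidean_space set \<Rightarrow> 'a set set" where
  "pi0 s Z = rcls s Z ` Z"

definition full_subcomplex :: "'a set set \<Rightarrow> 'a set \<Rightarrow> 'a set set" where
  "full_subcomplex K W = {\<sigma> \<in> K. \<sigma> \<subseteq> W}"

text \<open>V_s(X)(y) for Y = insert y X.\<close>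
definition Vy :: "real \<Rightarrow> 'a::euclidean_space set \<Rightarrow> 'a \<Rightarrow> 'a set set" where
  "Vy s X y = full_subcomplex (rips s X)
      {x \<in> X. rcls s (insert y X) x = rcls s (insert y X) y}"

text \<open>Phase change numbers s_0 < s_1 < ... < s_k, as the sorted list of distinct distances.\<close>
definition phase :: "'a::euclidean_space set \<Rightarrow> real list" where
  "phase X = sorted_list_of_set {dist x x' | x x'. x \<in> X \<and> x' \<in> X}"

end

theory Submission
  imports Defs
begin

lemma rips_vertices: "s \<ge> 0 \<Longrightarrow> sc_vertices (rips s Z) = Z"
  unfolding sc_vertices_def rips_def
  by auto

lemma edges_rips: "s \<ge> 0 \<Longrightarrow> (a,b) \<in> sc_edges (rips s Z) \<longleftrightarrow> a \<in> Z \<and> b \<in> Z \<and> dist a b \<le> s"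
  unfolding sc_edges_def rips_def by (auto simp: dist_commute)

lemma sym_edges: "sym (sc_edges K)"
  unfolding sc_edges_def sym_def by (auto simp: insert_commute)

lemma rtr_sym: "(a,b) \<in> (sc_edges K)\<^sup>* \<Longrightarrow> (b,a) \<in> (sc_edges K)\<^sup>*"
  by (metis sym_edges sym_rtrancl symD)

lemma comp_eq: "(u,v) \<in> (sc_edges K)\<^sup>* \<Longrightarrow> sc_component K u = sc_component K v"
  unfolding sc_component_def
  using rtr_sym rtrancl_trans by (smt (verit, best) Collect_cong)

lemma comp_eq_iff: "v \<in> sc_vertices K \<Longrightarrow>
   (sc_component K u = sc_component K v) \<longleftrightarrow> (u,v) \<in> (sc_edges K)\<^sup>*"
proof
  assume v: "v \<in> sc_vertices K" and e: "sc_component K u = sc_component K v"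
  have "v \<in> sc_component K v" using v unfolding sc_component_def by auto
  then show "(u,v) \<in> (sc_edges K)\<^sup>*" using e unfolding sc_component_def by auto
qed (rule comp_eq)

lemma edges_full: "(a,b) \<in> sc_edges (full_subcomplex K W) \<longleftrightarrow> (a,b) \<in> sc_edges K \<and> a \<in> W \<and> b \<in> W"
  unfolding sc_edges_def full_subcomplex_def by auto

lemma vertices_full: "s \<ge> 0 \<Longrightarrow> W \<subseteq> X \<Longrightarrow> sc_vertices (full_subcomplex (rips s X) W) = W"
  unfolding sc_vertices_def full_subcomplex_def rips_def
  by auto

theorem lemma11:
  fixes X :: "'a::euclidean_space set" and y x0 :: 'a and r s :: real
  assumes "finite X" and "card X \<ge> 2" and "y \<notin> X"
    and "x0 \<in> X" and "r > 0" and "dist y x0 < r"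
    and "\<forall>i. i + 1 < length (phase X) \<longrightarrow> r < phase X ! (i + 1) - phase X ! i"
    and "\<exists>i. 1 \<le> i \<and> i < length (phase X) \<and> phase X ! i \<le> s \<and>
              (i + 1 < length (phase X) \<longrightarrow> s + r < phase X ! (i + 1))"
  shows "sc_connected (Vy s X y)
    \<and> (\<forall>x\<in>X. \<forall>x'\<in>X. rcls s X x = rcls s X x' \<longrightarrow>
          rcls s (insert y X) x = rcls s (insert y X) x')
    \<and> bij_betw (\<lambda>C. rcls s (insert y X) (SOME x. x \<in> C)) (pi0 s X) (pi0 s (insert y X))"
proof -
  define L where "L = phase X"
  define D where "D = {dist x x' | x x'. x \<in> X \<and> x' \<in> X}"
  have Dimg: "D = (\<lambda>(x,x'). dist x x') ` (X \<times> X)" unfolding D_def by auto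
  have finD: "finite D" unfolding Dimg using assms(1) by auto
  have setL: "set L = D" unfolding L_def phase_def D_def[symmetric] using finD by simp
  have sortL: "sorted L" unfolding L_def phase_def by simp
  obtain i where i: "1 \<le> i" "i < length L" "L ! i \<le> s"
    "i + 1 < length L \<longrightarrow> s + r < L ! (i + 1)" using assms(8) unfolding L_def by blast
  have "r < L ! 1 - L ! 0" proof -
    have "0 + 1 < length L" using i by simp
    then show ?thesis using assms(7) unfolding L_def by fastforce
  qed
  moreover have "L ! 0 \<ge> 0" proof -
    have "0 < length L" using i(2) by linarith
    then have "L ! 0 \<in> set L" by (rule nth_mem)
    then have "L ! 0 \<in> D" using setL by simp
    then show ?thesis unfolding D_def by auto
  qed
  moreover have "L ! 1 \<le> L ! i" using sortL i by (simp add: sorted_nth_mono)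
  ultimately have rs: "r < s" using i by linarith
  have s0: "s \<ge> 0" using rs assms(5) by linarith
  have key: "dist u v \<le> s" if "u \<in> X" "v \<in> X" "dist u v < s + r" for u v
  proof -
    have "dist u v \<in> set L" using setL that unfolding D_def by auto
    then obtain j where j: "j < length L" "L ! j = dist u v" by (auto simp: in_set_conv_nth)
    show ?thesis
    proof (cases "j \<le> i")
      case True
      then have "L ! j \<le> L ! i" using sortL i by (simp add: sorted_nth_mono)
      then show ?thesis using j i by linarith
    next
      case False
      then have "i + 1 \<le> j" by simp
      then have "i + 1 < length L" "L ! (i+1) \<le> L ! j" using sortL j(1) by (auto intro: sorted_nth_mono)
      then show ?thesis using i j that by linarith
    qed
  qed
  define Y where "Y = insert y X"
  define f where "f = (\<lambda>z. if z = y then x0 else z)"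
  define EXX where "EXX = sc_edges (rips s X)"
  define EYY where "EYY = sc_edges (rips s Y)"
  have EXXi: "(a,b) \<in> EXX \<longleftrightarrow> a \<in> X \<and> b \<in> X \<and> dist a b \<le> s" for a b
    unfolding EXX_def using edges_rips[OF s0] .
  have EYYi: "(a,b) \<in> EYY \<longleftrightarrow> a \<in> Y \<and> b \<in> Y \<and> dist a b \<le> s" for a b
    unfolding EYY_def using edges_rips[OF s0] .
  have fX: "z \<in> Y \<Longrightarrow> f z \<in> X" for z using assms(4) unfolding f_def Y_def by auto
  have yx0: "(y, x0) \<in> EYY" using EYYi assms(4,6) rs unfolding Y_def by auto
  have A: "f a = f b \<or> (f a, f b) \<in> EXX" if "(a,b) \<in> EYY" for a b
  proof -
    have ab: "a \<in> Y" "b \<in> Y" "dist a b \<le> s" using that EYYi by auto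
    show ?thesis
    proof (cases "a = y")
      case ay: True
      show ?thesis
      proof (cases "b = y")
        case True then show ?thesis using ay by simp
      next
        case False
        then have bX: "b \<in> X" using ab Y_def by auto
        have "dist x0 b \<le> dist x0 y + dist y b" by (rule dist_triangle)
        then have "dist x0 b < s + r" using ab ay assms(6) by (simp add: dist_commute)
        then have "dist x0 b \<le> s" using key assms(4) bX by blast
        then show ?thesis using EXXi ay False bX assms(4) unfolding f_def by auto
      qed
    next
      case anY: False
      then have aX: "a \<in> X" using ab Y_def by auto
      show ?thesis
      proof (cases "b = y")
        case bY: True
        have "dist a x0 \<le> dist a y + dist y x0" by (rule dist_triangle)
        then have "dist a x0 < s + r" using ab bY assms(6) by (simp add: dist_commute)
        then have "dist a x0 \<le> s" using key assms(4) aX by blast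
        then show ?thesis using EXXi anY bY aX assms(4) unfolding f_def by auto
      next
        case False
        then have bX: "b \<in> X" using ab Y_def by auto
        then show ?thesis using EXXi anY False aX ab unfolding f_def by auto
      qed
    qed
  qed
  have B: "(f a, f b) \<in> EXX\<^sup>*" if "(a,b) \<in> EYY\<^sup>*" for a b
    using that
  proof (induction rule: rtrancl_induct)
    case base then show ?case by simp
  next
    case (step b c)
    from A[OF step(2)] show ?case
    proof
      assume "f b = f c" then show ?thesis using step(3) by simp
    next
      assume "(f b, f c) \<in> EXX" then show ?thesis by (rule rtrancl_into_rtrancl[OF step(3)])
    qed
  qed
  define W where "W = {x \<in> X. rcls s Y x = rcls s Y y}"
  have VY: "sc_vertices (rips s Y) = Y" using rips_vertices[OF s0] .
  have VX: "sc_vertices (rips s X) = X" using rips_vertices[OF s0] .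
  have yY: "y \<in> Y" unfolding Y_def by simp
  have Wi: "x \<in> W \<longleftrightarrow> x \<in> X \<and> (x, y) \<in> EYY\<^sup>*" for x
    unfolding W_def rcls_def EYY_def using comp_eq_iff[of y "rips s Y"] VY yY by auto
  define EV where "EV = sc_edges (Vy s X y)"
  have VyW: "Vy s X y = full_subcomplex (rips s X) W" unfolding Vy_def W_def Y_def by simp
  have EVi: "(a,b) \<in> EV \<longleftrightarrow> (a,b) \<in> EXX \<and> a \<in> W \<and> b \<in> W" for a b
    unfolding EV_def VyW EXX_def by (rule edges_full)
  have x0W: "x0 \<in> W" using Wi assms(4) yx0 rtr_sym[of y x0] unfolding EYY_def by auto
  have fW: "f z \<in> W" if "(y, z) \<in> EYY\<^sup>*" for z
  proof -
    have zY: "z \<in> Y" using that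
    proof (induction rule: rtrancl_induct)
      case base show ?case using yY .
    next
      case (step a b) then show ?case using EYYi by auto
    qed
    show ?thesis
    proof (cases "z = y")
      case True then show ?thesis using x0W f_def by simp
    next
      case False
      then show ?thesis using zY Wi that rtr_sym[of y z] unfolding f_def EYY_def Y_def by auto
    qed
  qed
  have C: "(x0, f b) \<in> EV\<^sup>*" if "(y,b) \<in> EYY\<^sup>*" for b
    using that
  proof (induction rule: rtrancl_induct)
    case base then show ?case by (simp add: f_def)
  next
    case (step b c)
    have c: "(y, c) \<in> EYY\<^sup>*" using step(1,2) by (rule rtrancl.rtrancl_into_rtrancl)
    from A[OF step(2)] show ?case
    proof
      assume "f b = f c" then show ?thesis using step(3) by simp
    next
      assume "(f b, f c) \<in> EXX"
      then have "(f b, f c) \<in> EV" using EVi fW[OF step(1)] fW[OF c] by blast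
      then show ?thesis by (rule rtrancl_into_rtrancl[OF step(3)])
    qed
  qed
  have VV: "sc_vertices (Vy s X y) = W"
    unfolding VyW by (rule vertices_full[OF s0]) (auto simp: W_def)
  have part1: "sc_connected (Vy s X y)"
    unfolding sc_connected_def VV
  proof (intro conjI ballI)
    show "W \<noteq> {}" using x0W by auto
  next
    fix a b assume a: "a \<in> W" and b: "b \<in> W"
    have ea: "(x0, a) \<in> EV\<^sup>*" if a: "a \<in> W" for a
    proof -
      have "a \<noteq> y" using a assms(3) Wi by auto
      then have fa: "f a = a" unfolding f_def by simp
      have "(a, y) \<in> EYY\<^sup>*" using a Wi by blast
      then have "(y, a) \<in> EYY\<^sup>*" unfolding EYY_def by (rule rtr_sym)
      from C[OF this] show ?thesis unfolding fa .
    qed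
    have "(x0, a) \<in> EV\<^sup>*" "(x0, b) \<in> EV\<^sup>*" using ea a b by auto
    then show "(a, b) \<in> (sc_edges (Vy s X y))\<^sup>*"
      unfolding EV_def using rtr_sym rtrancl_trans by metis
  qed
  have EXXY: "EXX \<subseteq> EYY" using EXXi EYYi Y_def by auto
  have part2: "\<forall>x\<in>X. \<forall>x'\<in>X. rcls s X x = rcls s X x' \<longrightarrow> rcls s Y x = rcls s Y x'"
  proof (intro ballI impI)
    fix x x' assume x: "x \<in> X" and x': "x' \<in> X" and e: "rcls s X x = rcls s X x'"
    then have "(x, x') \<in> EXX\<^sup>*" using comp_eq_iff[of x' "rips s X" x] VX
      unfolding rcls_def EXX_def by auto
    then have "(x, x') \<in> EYY\<^sup>*" using EXXY rtrancl_mono by blast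
    then show "rcls s Y x = rcls s Y x'" unfolding rcls_def EYY_def by (rule comp_eq)
  qed
  have some: "rcls s Y (SOME z. z \<in> rcls s X x) = rcls s Y x" if x: "x \<in> X" for x
  proof -
    have "x \<in> rcls s X x" using x VX unfolding rcls_def sc_component_def by auto
    then have "(SOME z. z \<in> rcls s X x) \<in> rcls s X x" by (rule someI)
    then obtain z where z: "z = (SOME z. z \<in> rcls s X x)" "z \<in> X" "(x,z) \<in> EXX\<^sup>*"
      unfolding rcls_def sc_component_def EXX_def using VX by auto
    then have "rcls s X x = rcls s X z" unfolding rcls_def EXX_def by (simp add: comp_eq)
    then have "rcls s Y x = rcls s Y z" using part2 x z(2) by blast
    then show ?thesis using z(1) by simp
  qed
  have part3: "bij_betw (\<lambda>C. rcls s Y (SOME x. x \<in> C)) (pi0 s X) (pi0 s Y)"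
    unfolding bij_betw_def pi0_def
  proof
    show "inj_on (\<lambda>C. rcls s Y (SOME x. x \<in> C)) (rcls s X ` X)"
    proof (rule inj_onI, clarsimp simp: some)
      fix x x' assume x: "x \<in> X" and x': "x' \<in> X" and e: "rcls s Y x = rcls s Y x'"
      have "x' \<in> Y" using x' Y_def by auto
      then have "(x, x') \<in> EYY\<^sup>*" using comp_eq_iff[of x' "rips s Y" x] VY e
        unfolding rcls_def EYY_def by auto
      then have "(f x, f x') \<in> EXX\<^sup>*" by (rule B)
      moreover have "f x = x" "f x' = x'" using x x' assms(3) f_def by auto
      ultimately show "rcls s X x = rcls s X x'" unfolding rcls_def EXX_def by (simp add: comp_eq)
    qed
  next
    have "rcls s Y y = rcls s Y x0" using yx0 unfolding rcls_def EYY_def by (rule comp_eq[OF r_into_rtrancl])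
    then show "(\<lambda>C. rcls s Y (SOME x. x \<in> C)) ` rcls s X ` X = rcls s Y ` Y"
      using some assms(4) unfolding Y_def by (auto simp: image_image)
  qed
  from part1 part2 part3 show ?thesis unfolding Y_def by (intro conjI)
qed

end
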